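(* The $\mathbb F$-algebra $\Delta$ has a presentation by generators $A$, $B$, $\gamma$ and relations \begin{gather*} A^3B-[3]_q A^2BA+[3]_q ABA^2-BA^3 = -(q^2-q^{-2})^2(AB-BA),\\ B^3A-[3]_q B^2AB+[3]_q BAB^2-AB^3 = -(q^2-q^{-2})^2(BA-AB),\\ A^2B^2-B^2A^2+(q^2+q^{-2})(BABA-ABAB) = -(q-q^{-1})^2(AB-BA)\gamma,\\ \gamma A = A\gamma,\qquad \gamma B = B\gamma. \end{gather*}
   Context: Let $\mathbb F$ be a field and fix a nonzero $q\in\mathbb F$ with $q^4\neq 1$. Algebras are associative with 1. The universal Askey--Wilson algebra $\Delta=\Delta_q$ is the $\mathbb F$-algebra with generators $A,B,C$ subject to the relations that each of $A+\frac{qBC-q^{-1}CB}{q^2-q^{-2}}$, $B+\frac{qCA-q^{-1}AC}{q^2-q^{-2}}$, $C+\frac{qAB-q^{-1}BA}{q^2-q^{-2}}$ is central in $\Delta$. Define $\alpha,\beta,\gamma$ by multiplying these three central elements (in this order) by $q+q^{-1}$; so e.g. $C+\frac{qAB-q^{-1}BA}{q^2-q^{-2}}=\frac{\gamma}{q+q^{-1}}$. Here $[n]_q=\frac{q^n-q^{-n}}{q-q^{-1}}$. *)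

theory Defs
  imports Main "HOL-Library.Poly_Mapping"
begin

text \<open>Words over an alphabet 'g form a (noncommutative) monoid under concatenation;
  we write it additively so that Poly_Mapping's convolution product applies.
  The free associative algebra on 'g over 'k is then ('g word =>0 'k).\<close>

datatype 'g word = Word "'g list"

fun word_list :: "'g word \<Rightarrow> 'g list" where
  "word_list (Word u) = u"

instantiation word :: (type) monoid_add
begin
definition zero_word_def: "0 = Word []"
definition plus_word_def: "x + y = Word (word_list x @ word_list y)"
instance
proof
  fix x y z :: "'a word"
  show "x + y + z = x + (y + z)" by (simp add: plus_word_def)
  show "0 + x = x" by (cases x) (simp add: plus_word_def zero_word_def)
  show "x + 0 = x" by (cases x) (simp add: plus_word_def zero_word_def)
qed
end

type_synonym ('g, 'k) freealg = "'g word \<Rightarrow>\<^sub>0 'k"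

definition sc :: "'k::ring_1 \<Rightarrow> ('g, 'k) freealg" where
  "sc c = Poly_Mapping.single 0 c"

definition gen :: "'g \<Rightarrow> ('g, 'k::ring_1) freealg" where
  "gen x = Poly_Mapping.single (Word [x]) 1"

definition fsubst :: "('g \<Rightarrow> ('h, 'k::ring_1) freealg) \<Rightarrow> ('g, 'k) freealg \<Rightarrow> ('h, 'k) freealg" where
  "fsubst \<sigma> p = (\<Sum>w\<in>Poly_Mapping.keys p. sc (Poly_Mapping.lookup p w) * prod_list (map \<sigma> (word_list w)))"

inductive_set ideal_gen :: "'a::ring_1 set \<Rightarrow> 'a set" for S where
  zero: "0 \<in> ideal_gen S"
| gen: "s \<in> S \<Longrightarrow> a * s * b \<in> ideal_gen S"
| add: "x \<in> ideal_gen S \<Longrightarrow> y \<in> ideal_gen S \<Longrightarrow> x + y \<in> ideal_gen S"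

definition qint :: "'k::field \<Rightarrow> nat \<Rightarrow> 'k" where
  "qint q n = (q ^ n - inverse q ^ n) / (q - inverse q)"

definition commut :: "'a::ring \<Rightarrow> 'a \<Rightarrow> 'a" where
  "commut x y = x * y - y * x"

datatype gABC = XA | XB | XC
datatype gABG = YA | YB | YG

text \<open>The three elements required to be central in Delta (alpha, beta, gamma divided by q+q^-1).\<close>
definition aw_cent :: "'k::field \<Rightarrow> ('g, 'k) freealg \<Rightarrow> ('g, 'k) freealg \<Rightarrow> ('g, 'k) freealg
    \<Rightarrow> ('g, 'k) freealg" where
  "aw_cent q x y z = x + sc (inverse (q^2 - inverse q ^ 2)) * (sc q * y * z - sc (inverse q) * z * y)"

definition delta_rels :: "'k::field \<Rightarrow> (gABC, 'k) freealg set" where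
  "delta_rels q = {commut z (gen x) | z x.
      z \<in> {aw_cent q (gen XA) (gen XB) (gen XC),
           aw_cent q (gen XB) (gen XC) (gen XA),
           aw_cent q (gen XC) (gen XA) (gen XB)}}"

definition aw_gamma :: "'k::field \<Rightarrow> (gABC, 'k) freealg" where
  "aw_gamma q = sc (q + inverse q) * aw_cent q (gen XC) (gen XA) (gen XB)"

text \<open>Relations of the new presentation, each written as LHS - RHS.\<close>
definition pres_rels :: "'k::field \<Rightarrow> (gABG, 'k) freealg set" where
  "pres_rels q = (let A = gen YA; B = gen YB; G = gen YG; t = sc (qint q 3) in
     { A^3*B - t*A^2*B*A + t*A*B*A^2 - B*A^3 + sc ((q^2 - inverse q ^ 2)^2) * (A*B - B*A),
       B^3*A - t*B^2*A*B + t*B*A*B^2 - A*B^3 + sc ((q^2 - inverse q ^ 2)^2) * (B*A - A*B),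
       A^2*B^2 - B^2*A^2 + sc (q^2 + inverse q ^ 2) * (B*A*B*A - A*B*A*B)
         + sc ((q - inverse q)^2) * (A*B - B*A) * G,
       G*A - A*G,
       G*B - B*G })"

definition pres_map :: "'k::field \<Rightarrow> (gABG, 'k) freealg \<Rightarrow> (gABC, 'k) freealg" where
  "pres_map q = fsubst (\<lambda>y. case y of YA \<Rightarrow> gen XA | YB \<Rightarrow> gen XB | YG \<Rightarrow> aw_gamma q)"

end

theory Submission
  imports Defs
begin


lemma sc_add: "sc (a + b) = (sc a + sc b :: ('g,'k::field) freealg)" by (simp add: sc_def single_add)
lemma sc_mult: "sc (a * b) = (sc a * sc b :: ('g,'k::field) freealg)" by (simp add: sc_def mult_single)
lemma sc_one: "sc 1 = (1 :: ('g,'k::field) freealg)" by (simp add: sc_def)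
lemma sc_zero: "sc 0 = (0 :: ('g,'k::field) freealg)" by (simp add: sc_def)
lemma sc_uminus: "sc (- a) = (- sc a :: ('g,'k::field) freealg)" by (simp add: sc_def single_uminus)
lemma sc_diff: "sc (a - b) = (sc a - sc b :: ('g,'k::field) freealg)" by (simp add: sc_def single_diff)

lemma pm_expand: "p = (\<Sum>w\<in>Poly_Mapping.keys p. Poly_Mapping.single w (Poly_Mapping.lookup p w))"
proof (rule poly_mapping_eqI)
  fix k
  show "Poly_Mapping.lookup p k = Poly_Mapping.lookup (\<Sum>w\<in>Poly_Mapping.keys p. Poly_Mapping.single w (Poly_Mapping.lookup p w)) k"
    by (simp add: lookup_sum lookup_single when_def in_keys_iff)
qed

lemma sc_comm: "sc c * x = x * (sc c :: ('g,'k::field) freealg)"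
proof -
  have "sc c * x = (\<Sum>w\<in>Poly_Mapping.keys x. sc c * Poly_Mapping.single w (Poly_Mapping.lookup x w))"
    by (subst pm_expand[of x]) (simp add: sum_distrib_left)
  also have "\<dots> = (\<Sum>w\<in>Poly_Mapping.keys x. Poly_Mapping.single w (Poly_Mapping.lookup x w) * sc c)"
    by (rule sum.cong) (simp_all add: sc_def mult_single mult.commute)
  also have "\<dots> = x * sc c"
    by (subst (2) pm_expand[of x]) (simp add: sum_distrib_right)
  finally show ?thesis .
qed



abbreviation wprod :: "('g \<Rightarrow> ('h, 'k::ring_1) freealg) \<Rightarrow> 'g word \<Rightarrow> ('h, 'k) freealg" where
  "wprod \<sigma> w \<equiv> prod_list (map \<sigma> (word_list w))"

lemma fsubst_superset:
  fixes \<sigma> :: "'g \<Rightarrow> ('h, 'k::field) freealg"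
  assumes "finite S" "Poly_Mapping.keys p \<subseteq> S"
  shows "fsubst \<sigma> p = (\<Sum>w\<in>S. sc (Poly_Mapping.lookup p w) * wprod \<sigma> w)"
  unfolding fsubst_def
  by (rule sum.mono_neutral_left) (use assms in \<open>auto simp: in_keys_iff sc_zero\<close>)

lemma fsubst_add:
  fixes \<sigma> :: "'g \<Rightarrow> ('h, 'k::field) freealg"
  shows "fsubst \<sigma> (p + r) = fsubst \<sigma> p + fsubst \<sigma> r"
proof -
  let ?S = "Poly_Mapping.keys p \<union> Poly_Mapping.keys r"
  have "fsubst \<sigma> (p + r) = (\<Sum>w\<in>?S. sc (Poly_Mapping.lookup (p+r) w) * wprod \<sigma> w)"
    by (rule fsubst_superset) (auto dest: set_mp[OF keys_add])
  also have "\<dots> = (\<Sum>w\<in>?S. sc (Poly_Mapping.lookup p w) * wprod \<sigma> w) + (\<Sum>w\<in>?S. sc (Poly_Mapping.lookup r w) * wprod \<sigma> w)"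
    by (simp add: lookup_add sc_add distrib_right sum.distrib)
  also have "\<dots> = fsubst \<sigma> p + fsubst \<sigma> r"
    by (subst (1 2) fsubst_superset[symmetric]) auto
  finally show ?thesis .
qed

lemma fsubst_zero:
  fixes \<sigma> :: "'g \<Rightarrow> ('h, 'k::field) freealg"
  shows "fsubst \<sigma> 0 = 0" by (simp add: fsubst_def)

lemma fsubst_uminus:
  fixes \<sigma> :: "'g \<Rightarrow> ('h, 'k::field) freealg"
  shows "fsubst \<sigma> (- p) = - fsubst \<sigma> p"
  using fsubst_add[of \<sigma> "-p" p] by (simp add: fsubst_zero eq_neg_iff_add_eq_0)

lemma fsubst_diff:
  fixes \<sigma> :: "'g \<Rightarrow> ('h, 'k::field) freealg"
  shows "fsubst \<sigma> (p - r) = fsubst \<sigma> p - fsubst \<sigma> r"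
  using fsubst_add[of \<sigma> p "-r"] by (simp add: fsubst_uminus)

lemma fsubst_single:
  fixes \<sigma> :: "'g \<Rightarrow> ('h, 'k::field) freealg"
  shows "fsubst \<sigma> (Poly_Mapping.single w c) = sc c * wprod \<sigma> w"
  by (subst fsubst_superset[where S="{w}"]) auto

lemma fsubst_sum:
  fixes \<sigma> :: "'g \<Rightarrow> ('h, 'k::field) freealg"
  shows "fsubst \<sigma> (\<Sum>i\<in>I. f i) = (\<Sum>i\<in>I. fsubst \<sigma> (f i))"
  by (induction I rule: infinite_finite_induct) (auto simp: fsubst_zero fsubst_add)

lemma word_list_plus: "word_list (u + v) = word_list u @ word_list v"
  by (simp add: plus_word_def)

lemma fsubst_mult:
  fixes \<sigma> :: "'g \<Rightarrow> ('h, 'k::field) freealg"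
  shows "fsubst \<sigma> (p * r) = fsubst \<sigma> p * fsubst \<sigma> r"
proof -
  have "p * r = (\<Sum>u\<in>Poly_Mapping.keys p. Poly_Mapping.single u (Poly_Mapping.lookup p u)) *
      (\<Sum>v\<in>Poly_Mapping.keys r. Poly_Mapping.single v (Poly_Mapping.lookup r v))"
    by (subst (1) pm_expand[of p], subst (1) pm_expand[of r]) (rule refl)
  also have "\<dots> = (\<Sum>u\<in>Poly_Mapping.keys p. \<Sum>v\<in>Poly_Mapping.keys r.
       Poly_Mapping.single (u + v) (Poly_Mapping.lookup p u * Poly_Mapping.lookup r v))"
    by (simp add: sum_product mult_single)
  finally have 1: "fsubst \<sigma> (p * r) = (\<Sum>u\<in>Poly_Mapping.keys p. \<Sum>v\<in>Poly_Mapping.keys r.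
       sc (Poly_Mapping.lookup p u * Poly_Mapping.lookup r v) * wprod \<sigma> (u + v))"
    by (simp add: fsubst_sum fsubst_single)
  have 2: "fsubst \<sigma> p * fsubst \<sigma> r = (\<Sum>u\<in>Poly_Mapping.keys p. \<Sum>v\<in>Poly_Mapping.keys r.
       (sc (Poly_Mapping.lookup p u) * wprod \<sigma> u) * (sc (Poly_Mapping.lookup r v) * wprod \<sigma> v))"
    unfolding fsubst_def by (simp add: sum_product)
  have 3: "sc (a * b) * wprod \<sigma> (u + v) = (sc a * wprod \<sigma> u) * (sc b * wprod \<sigma> v)" for a b u v
  proof -
    have "sc (a * b) * wprod \<sigma> (u + v) = sc a * (sc b * wprod \<sigma> u) * wprod \<sigma> v"
      by (simp add: word_list_plus sc_mult mult.assoc)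
    also have "\<dots> = sc a * (wprod \<sigma> u * sc b) * wprod \<sigma> v" by (simp add: sc_comm)
    finally show ?thesis by (simp add: mult.assoc)
  qed
  show ?thesis unfolding 1 2 3 ..
qed

lemma word_list_0: "word_list 0 = []" by (simp add: zero_word_def)

lemma fsubst_one:
  fixes \<sigma> :: "'g \<Rightarrow> ('h, 'k::field) freealg"
  shows "fsubst \<sigma> 1 = 1"
  using fsubst_single[of \<sigma> 0 1] by (simp add: sc_one word_list_0)

lemma fsubst_sc:
  fixes \<sigma> :: "'g \<Rightarrow> ('h, 'k::field) freealg"
  shows "fsubst \<sigma> (sc c) = sc c"
  using fsubst_single[of \<sigma> 0 c] by (simp add: sc_def word_list_0)

lemma fsubst_gen:
  fixes \<sigma> :: "'g \<Rightarrow> ('h, 'k::field) freealg"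
  shows "fsubst \<sigma> (gen x) = \<sigma> x"
  using fsubst_single[of \<sigma> "Word [x]" 1] by (simp add: gen_def sc_one)

lemma fsubst_power:
  fixes \<sigma> :: "'g \<Rightarrow> ('h, 'k::field) freealg"
  shows "fsubst \<sigma> (p ^ n) = fsubst \<sigma> p ^ n"
  by (induction n) (simp_all add: fsubst_one fsubst_mult)

lemmas fsubst_simps = fsubst_add fsubst_zero fsubst_uminus fsubst_diff fsubst_mult fsubst_one
  fsubst_sc fsubst_gen fsubst_power

lemma fsubst_prod_list:
  fixes \<tau> :: "'g \<Rightarrow> ('h, 'k::field) freealg"
  shows "fsubst \<tau> (prod_list xs) = prod_list (map (fsubst \<tau>) xs)"
  by (induction xs) (simp_all add: fsubst_one fsubst_mult)

lemma fsubst_comp: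
  fixes \<tau> :: "'h \<Rightarrow> ('i, 'k::field) freealg" and \<sigma> :: "'g \<Rightarrow> ('h, 'k) freealg"
  shows "fsubst \<tau> (fsubst \<sigma> p) = fsubst (\<lambda>x. fsubst \<tau> (\<sigma> x)) p"
  unfolding fsubst_def[of \<sigma>]
  by (simp add: fsubst_sum fsubst_mult fsubst_sc fsubst_prod_list fsubst_def[of "\<lambda>x. fsubst \<tau> (\<sigma> x)"] comp_def)

lemma prod_gen: "prod_list (map gen l) = (Poly_Mapping.single (Word l) 1 :: ('g,'k::field) freealg)"
proof (induction l)
  case Nil then show ?case by (simp add: zero_word_def[symmetric])
next
  case (Cons x l) then show ?case by (simp add: gen_def mult_single plus_word_def)
qed

lemma fsubst_gen_id: "fsubst gen p = (p :: ('g,'k::field) freealg)"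
proof -
  have "fsubst gen p = (\<Sum>w\<in>Poly_Mapping.keys p. Poly_Mapping.single w (Poly_Mapping.lookup p w))"
    unfolding fsubst_def
  proof (rule sum.cong)
    fix w :: "'g word"
    show "sc (Poly_Mapping.lookup p w) * prod_list (map gen (word_list w)) = Poly_Mapping.single w (Poly_Mapping.lookup p w)"
      by (cases w) (simp add: prod_gen sc_def mult_single)
  qed simp
  also have "\<dots> = p" by (rule pm_expand[symmetric])
  finally show ?thesis .
qed



lemma fa_eqI: "(\<forall>l. Poly_Mapping.lookup p (Word l) = Poly_Mapping.lookup r (Word l)) \<Longrightarrow> p = r"
  by (rule poly_mapping_eqI) (metis word.exhaust)

definition AllW :: "nat \<Rightarrow> ('g list \<Rightarrow> bool) \<Rightarrow> bool" where "AllW n P = (\<forall>l. P l)"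

lemma AllW_step: "0 < n \<Longrightarrow> AllW n P = (P [] \<and> (\<forall>x. AllW (n - 1) (\<lambda>l. P (x # l))))"
  unfolding AllW_def by (metis list.exhaust)
lemma AllW_0: "AllW 0 P = (\<forall>l. P l)" by (simp add: AllW_def)
lemma AllW_intro: "AllW n P \<Longrightarrow> \<forall>l. P l" by (simp add: AllW_def)

lemma all_gABC: "(\<forall>x. P x) \<longleftrightarrow> P XA \<and> P XB \<and> P XC" by (metis gABC.exhaust)
lemma all_gABG: "(\<forall>x. P x) \<longleftrightarrow> P YA \<and> P YB \<and> P YG" by (metis gABG.exhaust)

lemmas expand_simps = gen_def sc_def zero_word_def plus_word_def ring_distribs mult_single
   lookup_add lookup_minus lookup_single power2_eq_square power3_eq_cube





definition awc :: "'k \<Rightarrow> 'k \<Rightarrow> 'k \<Rightarrow> ('g, 'k::field) freealg \<Rightarrow> ('g, 'k) freealg \<Rightarrow> ('g, 'k) freealg \<Rightarrow> ('g, 'k) freealg" where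
  "awc qi s q x y z = x + sc s * (sc q * y * z - sc qi * z * y)"

lemma I1:
  fixes q qi s :: "'k::field"
  assumes h1: "q * qi = 1" and h2: "s * (q^2 - qi^2) = 1"
  shows "let A = gen XA; B = gen XB; C = gen XC; b = awc qi s q B C A; g = awc qi s q C A B;
     p2 = q^2 - qi ^ 2; t = sc (q^2 + 1 + qi ^ 2) in
   A^3*B - t*A^2*B*A + t*A*B*A^2 - B*A^3 + sc (p2^2) * (A*B - B*A) =
   sc p2 * (sc q * commut g A * A - sc qi * A * commut g A) - sc (p2^2) * commut b A"
  unfolding Let_def commut_def awc_def
  apply (rule fa_eqI, rule AllW_intro[where n=5])
  apply (simp add: expand_simps AllW_step AllW_0 all_gABC)
  using h1 h2 by algebra

lemma I2:
  fixes q qi s :: "'k::field"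
  assumes h1: "q * qi = 1" and h2: "s * (q^2 - qi^2) = 1"
  shows "let A = gen XA; B = gen XB; C = gen XC; a = awc qi s q A B C; g = awc qi s q C A B;
     p2 = q^2 - qi ^ 2; t = sc (q^2 + 1 + qi ^ 2) in
   B^3*A - t*B^2*A*B + t*B*A*B^2 - A*B^3 + sc (p2^2) * (B*A - A*B) =
   sc p2 * (sc q * B * commut g B - sc qi * commut g B * B) - sc (p2^2) * commut a B"
  unfolding Let_def commut_def awc_def
  apply (rule fa_eqI, rule AllW_intro[where n=5])
  apply (simp add: expand_simps AllW_step AllW_0 all_gABC)
  using h1 h2 by algebra

lemma I3:
  fixes q qi s :: "'k::field"
  assumes h1: "q * qi = 1" and h2: "s * (q^2 - qi^2) = 1"
  shows "let A = gen XA; B = gen XB; C = gen XC; a = awc qi s q A B C; g = awc qi s q C A B;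
     p2 = q^2 - qi ^ 2 in
   A^2*B^2 - B^2*A^2 + sc (q^2 + qi^2) * (B*A*B*A - A*B*A*B) + sc ((q - qi)^2) * (A*B - B*A) * (sc (q + qi) * g) =
   sc p2 * (sc q * B * commut g A - sc qi * commut g A * B)
   + sc (p2 * qi) * (commut g A * B + A * commut g B - commut g B * A - B * commut g A)
   - sc (p2^2) * commut a A"
  unfolding Let_def commut_def awc_def
  apply (rule fa_eqI, rule AllW_intro[where n=5])
  apply (simp add: expand_simps AllW_step AllW_0 all_gABC)
  using h1 h2 by algebra

lemma Phi1:
  fixes q qi s k :: "'k::field"
  assumes h3: "k * (q + qi) = 1"
  shows "let A = gen XA; B = gen XB; C = gen XC in
     sc k * (sc (q+qi) * awc qi s q C A B) - sc s * (sc q * A*B - sc qi * B*A) = C"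
  unfolding Let_def awc_def
  apply (rule fa_eqI, rule AllW_intro[where n=3])
  apply (simp add: expand_simps AllW_step AllW_0 all_gABC)
  using h3 by algebra

definition cpsi :: "'k \<Rightarrow> 'k \<Rightarrow> 'k \<Rightarrow> 'k \<Rightarrow> (gABG, 'k::field) freealg" where
  "cpsi qi s q k = sc k * gen YG - sc s * (sc q * gen YA * gen YB - sc qi * gen YB * gen YA)"

definition R1 where "R1 qi q = (let A = gen YA; B = gen YB; t = sc (q^2 + 1 + qi ^ 2) in
   A^3*B - t*A^2*B*A + t*A*B*A^2 - B*A^3 + sc ((q^2 - qi^2)^2) * (A*B - B*A))"
definition R2 where "R2 qi q = (let A = gen YA; B = gen YB; t = sc (q^2 + 1 + qi ^ 2) in
   B^3*A - t*B^2*A*B + t*B*A*B^2 - A*B^3 + sc ((q^2 - qi^2)^2) * (B*A - A*B))"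
definition R3 where "R3 qi q = (let A = gen YA; B = gen YB; G = gen YG in
   A^2*B^2 - B^2*A^2 + sc (q^2 + qi^2) * (B*A*B*A - A*B*A*B) + sc ((q - qi)^2) * (A*B - B*A) * G)"
definition R4 where "R4 = gen YG * gen YA - gen YA * gen YG"
definition R5 where "R5 = gen YG * gen YB - gen YB * gen YG"

lemmas Rdefs = R1_def R2_def R3_def R4_def R5_def

lemma P0:
  fixes q qi s k :: "'k::field"
  shows "awc qi s q (cpsi qi s q k) (gen YA) (gen YB) = sc k * gen YG"
  unfolding awc_def cpsi_def
  apply (rule fa_eqI, rule AllW_intro[where n=3])
  apply (simp add: expand_simps AllW_step AllW_0 all_gABG)
  done

lemma Psi1:
  fixes q qi s k :: "'k::field"
  assumes h3: "k * (q + qi) = 1"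
  shows "sc (q + qi) * awc qi s q (cpsi qi s q k) (gen YA) (gen YB) = gen YG"
  unfolding awc_def cpsi_def
  apply (rule fa_eqI, rule AllW_intro[where n=3])
  apply (simp add: expand_simps AllW_step AllW_0 all_gABG)
  using h3 by algebra

lemma P1:
  fixes q qi s k :: "'k::field"
  assumes h1: "q * qi = 1" and h2: "s * (q^2 - qi^2) = 1" and h3: "k * (q + qi) = 1"
  shows "commut (awc qi s q (gen YA) (gen YB) (cpsi qi s q k)) (gen YA) =
     sc (s*k) * (sc q * gen YB * R4 - sc qi * (commut (gen YG) (gen YB * gen YA) - gen YA * R5)) - sc (s*s) * R3 qi q"
  unfolding awc_def cpsi_def Rdefs Let_def commut_def
  apply (rule fa_eqI, rule AllW_intro[where n=5])
  apply (simp add: expand_simps AllW_step AllW_0 all_gABG)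
  using h1 h2 h3 by algebra

lemma P2:
  fixes q qi s k :: "'k::field"
  assumes h1: "q * qi = 1" and h2: "s * (q^2 - qi^2) = 1" and h3: "k * (q + qi) = 1"
  shows "commut (awc qi s q (gen YA) (gen YB) (cpsi qi s q k)) (gen YB) =
     sc (s*k) * (sc q * gen YB * R5 - sc qi * R5 * gen YB) - sc (s*s) * R2 qi q"
  unfolding awc_def cpsi_def Rdefs Let_def commut_def
  apply (rule fa_eqI, rule AllW_intro[where n=5])
  apply (simp add: expand_simps AllW_step AllW_0 all_gABG)
  using h1 h2 h3 by algebra

lemma P3:
  fixes q qi s k :: "'k::field"
  assumes h1: "q * qi = 1" and h2: "s * (q^2 - qi^2) = 1" and h3: "k * (q + qi) = 1"
  shows "commut (awc qi s q (gen YB) (cpsi qi s q k) (gen YA)) (gen YA) =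
     sc (s*k) * (sc q * R4 * gen YA - sc qi * gen YA * R4) - sc (s*s) * R1 qi q"
  unfolding awc_def cpsi_def Rdefs Let_def commut_def
  apply (rule fa_eqI, rule AllW_intro[where n=5])
  apply (simp add: expand_simps AllW_step AllW_0 all_gABG)
  using h1 h2 h3 by algebra

lemma P4:
  fixes q qi s k :: "'k::field"
  assumes h1: "q * qi = 1" and h2: "s * (q^2 - qi^2) = 1" and h3: "k * (q + qi) = 1"
  shows "commut (awc qi s q (gen YB) (cpsi qi s q k) (gen YA)) (gen YB) =
     sc (s*k) * (sc q * (commut (gen YG) (gen YA * gen YB) - gen YB * R4) - sc qi * gen YA * R5) + sc (s*s) * R3 qi q"
  unfolding awc_def cpsi_def Rdefs Let_def commut_def
  apply (rule fa_eqI, rule AllW_intro[where n=5])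
  apply (simp add: expand_simps AllW_step AllW_0 all_gABG)
  using h1 h2 h3 by algebra




lemma ideal_mult_left: "x \<in> ideal_gen S \<Longrightarrow> c * x \<in> ideal_gen S"
proof (induction rule: ideal_gen.induct)
  case zero then show ?case by (simp add: ideal_gen.zero)
next
  case (gen s a b)
  then have "(c * a) * s * b \<in> ideal_gen S" by (rule ideal_gen.gen)
  then show ?case by (simp add: mult.assoc)
next
  case (add x y) then show ?case by (simp add: distrib_left ideal_gen.add)
qed

lemma ideal_mult_right: "x \<in> ideal_gen S \<Longrightarrow> x * c \<in> ideal_gen S"
proof (induction rule: ideal_gen.induct)
  case zero then show ?case by (simp add: ideal_gen.zero)
next
  case (gen s a b)
  then have "a * s * (b * c) \<in> ideal_gen S" by (rule ideal_gen.gen)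
  then show ?case by (simp add: mult.assoc)
next
  case (add x y) then show ?case by (simp add: distrib_right ideal_gen.add)
qed

lemma ideal_S: "s \<in> S \<Longrightarrow> s \<in> ideal_gen S"
  using ideal_gen.gen[of s S 1 1] by simp

lemma ideal_uminus: "x \<in> ideal_gen S \<Longrightarrow> - x \<in> ideal_gen S"
  using ideal_mult_left[of x S "-1"] by simp

lemma ideal_diff: "x \<in> ideal_gen S \<Longrightarrow> y \<in> ideal_gen S \<Longrightarrow> x - y \<in> ideal_gen S"
  using ideal_gen.add[of x S "-y"] ideal_uminus[of y S] by simp

lemma ideal_add: "x \<in> ideal_gen S \<Longrightarrow> y \<in> ideal_gen S \<Longrightarrow> x + y \<in> ideal_gen S"
  by (rule ideal_gen.add)

lemma ideal_hom:
  assumes add: "\<And>x y. f (x + y) = f x + f y" and mult: "\<And>x y. f (x * y) = f x * f y"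
    and zero: "f 0 = 0" and S: "\<And>s. s \<in> S \<Longrightarrow> f s \<in> ideal_gen T"
    and x: "x \<in> ideal_gen S"
  shows "f x \<in> ideal_gen T"
  using x
proof (induction rule: ideal_gen.induct)
  case zero then show ?case by (simp add: \<open>f 0 = 0\<close> ideal_gen.zero)
next
  case (gen s a b)
  then show ?case by (simp add: mult S ideal_mult_left ideal_mult_right)
next
  case (add x y) then show ?case by (simp add: \<open>\<And>x y. f (x + y) = f x + f y\<close> ideal_gen.add)
qed

lemma cm_add: "commut z (u + v) = commut z u + commut z (v :: 'a::ring)"
  by (simp add: commut_def algebra_simps)
lemma cm_diff: "commut z (u - v) = commut z u - commut z (v :: 'a::ring)"
  by (simp add: commut_def algebra_simps)
lemma cm_mult: "commut z (u * v) = commut z u * v + u * commut z (v :: 'a::ring)"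
  by (simp add: commut_def algebra_simps)
lemma cm_swap: "commut u z = - commut z (u :: 'a::ring)"
  by (simp add: commut_def algebra_simps)

lemma cmI_add: "commut z u \<in> ideal_gen S \<Longrightarrow> commut z v \<in> ideal_gen S \<Longrightarrow> commut z (u + v) \<in> ideal_gen S"
  by (simp add: cm_add ideal_add)
lemma cmI_diff: "commut z u \<in> ideal_gen S \<Longrightarrow> commut z v \<in> ideal_gen S \<Longrightarrow> commut z (u - v) \<in> ideal_gen S"
  by (simp add: cm_diff ideal_diff)
lemma cmI_mult: "commut z u \<in> ideal_gen S \<Longrightarrow> commut z v \<in> ideal_gen S \<Longrightarrow> commut z (u * v) \<in> ideal_gen S"
  by (simp add: cm_mult ideal_add ideal_mult_left ideal_mult_right)
lemma cmI_sc: "commut z (sc c :: ('g,'k::field) freealg) \<in> ideal_gen S"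
  by (simp add: commut_def sc_comm ideal_gen.zero)
lemma cmI_self: "commut z z \<in> ideal_gen S"
  by (simp add: commut_def ideal_gen.zero)
lemma cmI_swap: "commut z u \<in> ideal_gen S \<Longrightarrow> commut u z \<in> ideal_gen S"
  by (subst cm_swap) (rule ideal_uminus)
lemma cmI_scl: "commut z u \<in> ideal_gen S \<Longrightarrow> commut (sc c * z) (u :: ('g,'k::field) freealg) \<in> ideal_gen S"
proof -
  assume "commut z u \<in> ideal_gen S"
  then have "sc c * commut z u \<in> ideal_gen S" by (rule ideal_mult_left)
  moreover have "commut (sc c * z) u = sc c * commut z u"
  proof -
    have "u * (sc c * z) = sc c * (u * z)" by (metis mult.assoc sc_comm)
    then show ?thesis by (simp add: commut_def right_diff_distrib mult.assoc)
  qed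
  ultimately show ?thesis by simp
qed

lemma fsubst_commut:
  fixes \<sigma> :: "'g \<Rightarrow> ('h, 'k::field) freealg"
  shows "fsubst \<sigma> (commut x y) = commut (fsubst \<sigma> x) (fsubst \<sigma> y)"
  by (simp add: commut_def fsubst_simps)

lemma fsubst_awc:
  fixes \<sigma> :: "'g \<Rightarrow> ('h, 'k::field) freealg"
  shows "fsubst \<sigma> (awc qi s q x y z) = awc qi s q (fsubst \<sigma> x) (fsubst \<sigma> y) (fsubst \<sigma> z)"
  by (simp add: awc_def fsubst_simps)

theorem theorem2p2:
  fixes q :: "'k::field"
  assumes "q \<noteq> 0" and "q ^ 4 \<noteq> 1"
  shows "(\<forall>p \<in> ideal_gen (pres_rels q). pres_map q p \<in> ideal_gen (delta_rels q))
       \<and> (\<forall>x :: (gABC, 'k) freealg. \<exists>p. x - pres_map q p \<in> ideal_gen (delta_rels q))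
       \<and> (\<forall>p. pres_map q p \<in> ideal_gen (delta_rels q) \<longrightarrow> p \<in> ideal_gen (pres_rels q))"
proof -
  define qi where "qi = inverse q"
  have h1: "q * qi = 1" using assms(1) by (simp add: qi_def)
  have p2nz: "q^2 - qi^2 \<noteq> 0"
  proof
    assume "q^2 - qi^2 = 0"
    then have "q^2 = qi^2" by simp
    then have "q^4 = (q * qi)^2" by (simp add: power_mult_distrib power4_eq_xxxx power2_eq_square mult.assoc)
    then show False using h1 assms(2) by simp
  qed
  have fac: "q^2 - qi^2 = (q + qi) * (q - qi)" by (simp add: algebra_simps power2_eq_square)
  have sumnz: "q + qi \<noteq> 0" and difnz: "q - qi \<noteq> 0" using p2nz fac by auto
  define s where "s = inverse (q^2 - qi^2)"
  define k where "k = inverse (q + qi)"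
  have h2: "s * (q^2 - qi^2) = 1" using p2nz by (simp add: s_def)
  have h3: "k * (q + qi) = 1" using sumnz by (simp add: k_def)
  have qi_eq: "inverse q = qi" by (simp add: qi_def)
  have s_eq: "inverse (q^2 - qi^2) = s" by (simp add: s_def)
  have awc_eq: "aw_cent q x y z = awc qi s q x y z" for x y z :: "('g, 'k) freealg"
    by (simp add: aw_cent_def awc_def qi_eq s_eq)
  have qint3: "qint q 3 = q^2 + 1 + qi^2"
  proof -
    have "q^3 - qi^3 = (q - qi) * (q^2 + 1 + qi^2)" using h1 by algebra
    then show ?thesis using difnz by (simp add: qint_def qi_eq)
  qed
  have gamma_eq: "aw_gamma q = sc (q + qi) * awc qi s q (gen XC) (gen XA) (gen XB)"
    by (simp add: aw_gamma_def awc_eq qi_eq)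
  define \<sigma>\<phi> :: "gABG \<Rightarrow> (gABC, 'k) freealg" where
    "\<sigma>\<phi> = (\<lambda>y. case y of YA \<Rightarrow> gen XA | YB \<Rightarrow> gen XB | YG \<Rightarrow> aw_gamma q)"
  have phi_def: "pres_map q = fsubst \<sigma>\<phi>" by (simp add: pres_map_def \<sigma>\<phi>_def)
  define \<sigma>\<psi> :: "gABC \<Rightarrow> (gABG, 'k) freealg" where
    "\<sigma>\<psi> = (\<lambda>x. case x of XA \<Rightarrow> gen YA | XB \<Rightarrow> gen YB | XC \<Rightarrow> cpsi qi s q k)"
  define \<psi> where "\<psi> = fsubst \<sigma>\<psi>"
  have comp1: "pres_map q (\<psi> p) = p" for p
  proof -
    have "(\<lambda>x. fsubst \<sigma>\<phi> (\<sigma>\<psi> x)) = gen"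
    proof
      fix x show "fsubst \<sigma>\<phi> (\<sigma>\<psi> x) = gen x"
        using Phi1[OF h3, of s] 
        by (cases x) (simp_all add: \<sigma>\<psi>_def \<sigma>\<phi>_def cpsi_def fsubst_simps gamma_eq Let_def)
    qed
    then show ?thesis by (simp add: phi_def \<psi>_def fsubst_comp fsubst_gen_id)
  qed
  have comp2: "\<psi> (pres_map q p) = p" for p
  proof -
    have "(\<lambda>x. fsubst \<sigma>\<psi> (\<sigma>\<phi> x)) = gen"
    proof
      fix x show "fsubst \<sigma>\<psi> (\<sigma>\<phi> x) = gen x"
        using Psi1[OF h3, of s] 
        by (cases x) (simp_all add: \<sigma>\<psi>_def \<sigma>\<phi>_def fsubst_simps gamma_eq fsubst_awc)
    qed
    then show ?thesis by (simp add: phi_def \<psi>_def fsubst_comp fsubst_gen_id)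
  qed
  let ?I = "ideal_gen (delta_rels q)"
  let ?J = "ideal_gen (pres_rels q)"
  have prs: "pres_rels q = {R1 qi q, R2 qi q, R3 qi q, R4, R5}"
    by (simp add: pres_rels_def Rdefs Let_def qint3 qi_eq)
  have Dmem: "commut (aw_cent q X Y Z) (gen x) \<in> ?I"
    if "(X, Y, Z) \<in> {(gen XA, gen XB, gen XC), (gen XB, gen XC, gen XA), (gen XC, gen XA, gen XB)}" for X Y Z x
    using that by (intro ideal_S) (auto simp: delta_rels_def)
  have DA: "commut (awc qi s q (gen XA) (gen XB) (gen XC)) (gen x) \<in> ?I" for x
    using Dmem[of "gen XA" "gen XB" "gen XC" x] by (simp add: awc_eq)
  have DB: "commut (awc qi s q (gen XB) (gen XC) (gen XA)) (gen x) \<in> ?I" for x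
    using Dmem[of "gen XB" "gen XC" "gen XA" x] by (simp add: awc_eq)
  have DC: "commut (awc qi s q (gen XC) (gen XA) (gen XB)) (gen x) \<in> ?I" for x
    using Dmem[of "gen XC" "gen XA" "gen XB" x] by (simp add: awc_eq)
  have part1: "\<forall>p \<in> ?J. pres_map q p \<in> ?I"
  proof
    fix p assume p: "p \<in> ?J"
    show "pres_map q p \<in> ?I"
    proof (rule ideal_hom[OF _ _ _ _ p])
      show "pres_map q (x + y) = pres_map q x + pres_map q y" for x y by (simp add: phi_def fsubst_add)
      show "pres_map q (x * y) = pres_map q x * pres_map q y" for x y by (simp add: phi_def fsubst_mult)
      show "pres_map q 0 = 0" by (simp add: phi_def fsubst_zero)
      fix r assume "r \<in> pres_rels q"
      then consider "r = R1 qi q" | "r = R2 qi q" | "r = R3 qi q" | "r = R4" | "r = R5" by (auto simp: prs)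
      then show "pres_map q r \<in> ?I"
      proof cases
        case 1
        have "pres_map q r = sc (q^2 - qi ^ 2) * (sc q * commut (awc qi s q (gen XC) (gen XA) (gen XB)) (gen XA) * gen XA
             - sc qi * gen XA * commut (awc qi s q (gen XC) (gen XA) (gen XB)) (gen XA))
             - sc ((q^2 - qi ^ 2)^2) * commut (awc qi s q (gen XB) (gen XC) (gen XA)) (gen XA)"
          using I1[OF h1 h2] by (simp add: 1 phi_def R1_def Let_def fsubst_simps \<sigma>\<phi>_def)
        note eq = this
        show ?thesis unfolding eq by (blast intro: ideal_diff ideal_add ideal_mult_left ideal_mult_right DA DB DC)
      next
        case 2
        have "pres_map q r = sc (q^2 - qi ^ 2) * (sc q * gen XB * commut (awc qi s q (gen XC) (gen XA) (gen XB)) (gen XB)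
             - sc qi * commut (awc qi s q (gen XC) (gen XA) (gen XB)) (gen XB) * gen XB)
             - sc ((q^2 - qi ^ 2)^2) * commut (awc qi s q (gen XA) (gen XB) (gen XC)) (gen XB)"
          using I2[OF h1 h2] by (simp add: 2 phi_def R2_def Let_def fsubst_simps \<sigma>\<phi>_def)
        note eq = this
        show ?thesis unfolding eq by (blast intro: ideal_diff ideal_add ideal_mult_left ideal_mult_right DA DB DC)
      next
        case 3
        let ?g = "awc qi s q (gen XC) (gen XA) (gen XB)"
        have "pres_map q r = sc (q^2 - qi ^ 2) * (sc q * gen XB * commut ?g (gen XA) - sc qi * commut ?g (gen XA) * gen XB)
             + sc ((q^2 - qi ^ 2) * qi) * (commut ?g (gen XA) * gen XB + gen XA * commut ?g (gen XB)
                - commut ?g (gen XB) * gen XA - gen XB * commut ?g (gen XA))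
             - sc ((q^2 - qi ^ 2)^2) * commut (awc qi s q (gen XA) (gen XB) (gen XC)) (gen XA)"
          using I3[OF h1 h2] by (simp add: 3 phi_def R3_def Let_def fsubst_simps \<sigma>\<phi>_def gamma_eq)
        note eq = this
        show ?thesis unfolding eq by (blast intro: ideal_diff ideal_add ideal_mult_left ideal_mult_right DA DB DC)
      next
        case 4
        have "pres_map q r = commut (sc (q + qi) * awc qi s q (gen XC) (gen XA) (gen XB)) (gen XA)"
          by (simp add: 4 phi_def R4_def fsubst_simps \<sigma>\<phi>_def gamma_eq commut_def)
        then show ?thesis by (simp add: cmI_scl DC)
      next
        case 5
        have "pres_map q r = commut (sc (q + qi) * awc qi s q (gen XC) (gen XA) (gen XB)) (gen XB)"
          by (simp add: 5 phi_def R5_def fsubst_simps \<sigma>\<phi>_def gamma_eq commut_def)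
        then show ?thesis by (simp add: cmI_scl DC)
      qed
    qed
  qed
  have part2: "\<forall>x :: (gABC, 'k) freealg. \<exists>p. x - pres_map q p \<in> ?I"
  proof
    fix x :: "(gABC, 'k) freealg"
    have "x - pres_map q (\<psi> x) \<in> ?I" by (simp add: comp1 ideal_gen.zero)
    then show "\<exists>p. x - pres_map q p \<in> ?I" ..
  qed
  have RJ: "R1 qi q \<in> ?J" "R2 qi q \<in> ?J" "R3 qi q \<in> ?J" "R4 \<in> ?J" "R5 \<in> ?J"
    by (auto intro: ideal_S simp: prs)
  have GA: "commut (gen YG) (gen YA) \<in> ?J" using RJ(4) by (simp add: R4_def commut_def)
  have GB: "commut (gen YG) (gen YB) \<in> ?J" using RJ(5) by (simp add: R5_def commut_def)
  have GG: "commut (gen YG) (gen YG) \<in> ?J" by (rule cmI_self)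
  let ?c = "cpsi qi s q k"
  have Gc: "commut (gen YG) ?c \<in> ?J"
    unfolding cpsi_def by (intro cmI_add cmI_diff cmI_mult cmI_sc GA GB GG)
  let ?a = "awc qi s q (gen YA) (gen YB) ?c"
  let ?b = "awc qi s q (gen YB) ?c (gen YA)"
  have aA: "commut ?a (gen YA) \<in> ?J"
  proof -
    have "commut (gen YG) (gen YB * gen YA) \<in> ?J" by (intro cmI_mult GA GB)
    then show ?thesis unfolding P1[OF h1 h2 h3]
      by (blast intro: ideal_diff ideal_add ideal_mult_left ideal_mult_right RJ)
  qed
  have aB: "commut ?a (gen YB) \<in> ?J"
    unfolding P2[OF h1 h2 h3] by (blast intro: ideal_diff ideal_add ideal_mult_left ideal_mult_right RJ)
  have aG: "commut ?a (gen YG) \<in> ?J"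
    by (rule cmI_swap) (unfold awc_def, intro cmI_add cmI_diff cmI_mult cmI_sc GA GB GG Gc)
  have bA: "commut ?b (gen YA) \<in> ?J"
    unfolding P3[OF h1 h2 h3] by (blast intro: ideal_diff ideal_add ideal_mult_left ideal_mult_right RJ)
  have bB: "commut ?b (gen YB) \<in> ?J"
  proof -
    have "commut (gen YG) (gen YA * gen YB) \<in> ?J" by (intro cmI_mult GA GB)
    then show ?thesis unfolding P4[OF h1 h2 h3]
      by (blast intro: ideal_diff ideal_add ideal_mult_left ideal_mult_right RJ)
  qed
  have bG: "commut ?b (gen YG) \<in> ?J"
    by (rule cmI_swap) (unfold awc_def, intro cmI_add cmI_diff cmI_mult cmI_sc GA GB GG Gc)
  have Gx: "commut (gen YG) (\<sigma>\<psi> x) \<in> ?J" for x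
    by (cases x) (simp_all add: \<sigma>\<psi>_def GA GB Gc)
  have cI: "commut z ?c \<in> ?J"
    if "commut z (gen YA) \<in> ?J" "commut z (gen YB) \<in> ?J" "commut z (gen YG) \<in> ?J" for z
    unfolding cpsi_def by (intro cmI_add cmI_diff cmI_mult cmI_sc that)
  have ax: "commut ?a (\<sigma>\<psi> x) \<in> ?J" for x
    by (cases x) (simp_all add: \<sigma>\<psi>_def aA aB cI[OF aA aB aG])
  have bx: "commut ?b (\<sigma>\<psi> x) \<in> ?J" for x
    by (cases x) (simp_all add: \<sigma>\<psi>_def bA bB cI[OF bA bB bG])
  have gx: "commut (awc qi s q ?c (gen YA) (gen YB)) (\<sigma>\<psi> x) \<in> ?J" for x
    unfolding P0 by (rule cmI_scl[OF Gx])
  have psiD: "\<psi> d \<in> ?J" if "d \<in> delta_rels q" for d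
  proof -
    from that obtain z x where d: "d = commut z (gen x)" and
      z: "z = aw_cent q (gen XA) (gen XB) (gen XC) \<or> z = aw_cent q (gen XB) (gen XC) (gen XA)
          \<or> z = aw_cent q (gen XC) (gen XA) (gen XB)"
      by (auto simp: delta_rels_def)
    have "\<psi> d = commut (\<psi> z) (\<sigma>\<psi> x)" by (simp add: d \<psi>_def fsubst_commut fsubst_gen)
    have sv: "\<sigma>\<psi> XA = gen YA" "\<sigma>\<psi> XB = gen YB" "\<sigma>\<psi> XC = ?c" by (simp_all add: \<sigma>\<psi>_def)
    with z \<open>\<psi> d = _\<close> show ?thesis
      by (auto simp: \<psi>_def awc_eq fsubst_awc fsubst_gen sv ax bx gx)
  qed
  have part3: "\<forall>p. pres_map q p \<in> ?I \<longrightarrow> p \<in> ?J"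
  proof (intro allI impI)
    fix p assume p: "pres_map q p \<in> ?I"
    have "\<psi> (pres_map q p) \<in> ?J"
    proof (rule ideal_hom[OF _ _ _ _ p])
      show "\<psi> (x + y) = \<psi> x + \<psi> y" for x y by (simp add: \<psi>_def fsubst_add)
      show "\<psi> (x * y) = \<psi> x * \<psi> y" for x y by (simp add: \<psi>_def fsubst_mult)
      show "\<psi> 0 = 0" by (simp add: \<psi>_def fsubst_zero)
    qed (rule psiD)
    then show "p \<in> ?J" by (simp add: comp2)
  qed
  show ?thesis using part1 part2 part3 by blast
qed


end
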